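(* Let $r$ be a prime power and let $f\in\mathbb{F}_r[t_1,t_2]$ be a non-constant polynomial of degree at most $2$. Then the map $\mathbb{F}_r^2\to\mathbb{F}_r$ induced by $f$ takes at least $\lceil r/2\rceil$ distinct values. *)

theory Defs
  imports Complex_Main "HOL-Library.Cardinality"
begin

definition quad2_eval :: "'a::field \<Rightarrow> 'a \<Rightarrow> 'a \<Rightarrow> 'a \<Rightarrow> 'a \<Rightarrow> 'a \<Rightarrow> 'a \<times> 'a \<Rightarrow> 'a" where
  "quad2_eval c20 c11 c02 c10 c01 c00 = (\<lambda>(x, y).
     c20 * x^2 + c11 * x * y + c02 * y^2 + c10 * x + c01 * y + c00)"

end

theory Submission
  imports Defs
begin

lemma fib:
  fixes A B C x y :: "'a::field"
  assumes ab: "A \<noteq> 0 \<or> B \<noteq> 0" and eq: "A*x^2+B*x+C = A*y^2+B*y+C"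
  shows "y = x \<or> y = (if A = 0 then x else -B/A - x)"
proof -
  have "(x-y)*(A*(x+y)+B) = 0"
  proof -
    have "(x-y)*(A*(x+y)+B) = (A*x^2+B*x+C) - (A*y^2+B*y+C)"
      by (simp add: algebra_simps power2_eq_square)
    then show ?thesis using eq by simp
  qed
  then have "x = y \<or> A*(x+y)+B = 0" by simp
  then show ?thesis
  proof
    assume h: "A*(x+y)+B = 0"
    show ?thesis
    proof (cases "A = 0")
      case True then show ?thesis using h ab by simp
    next
      case False
      then have "y = -B/A - x" using h by (simp add: field_simps) (metis add.commute add_diff_cancel_left' distrib_left eq_neg_iff_add_eq_0 minus_add_distrib)
      then show ?thesis using False by simp
    qed
  qed auto
qed

lemma card_fib:
  fixes h :: "'a::finite \<Rightarrow> 'b" and \<sigma> :: "'a \<Rightarrow> 'a"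
  assumes "\<And>x y. h x = h y \<Longrightarrow> y = x \<or> y = \<sigma> x"
  shows "CARD('a) \<le> 2 * card (range h)"
proof -
  let ?k = "inv h"
  have "UNIV \<subseteq> ?k ` range h \<union> (\<sigma> \<circ> ?k) ` range h"
  proof
    fix x :: 'a
    have "h (?k (h x)) = h x" by (meson UNIV_I f_inv_into_f rangeI)
    then have "x = ?k (h x) \<or> x = \<sigma> (?k (h x))" using assms by metis
    then show "x \<in> ?k ` range h \<union> (\<sigma> \<circ> ?k) ` range h" by auto
  qed
  then have "CARD('a) \<le> card (?k ` range h \<union> (\<sigma> \<circ> ?k) ` range h)"
    by (simp add: card_mono)
  also have "\<dots> \<le> card (?k ` range h) + card ((\<sigma> \<circ> ?k) ` range h)" by (rule card_Un_le)
  also have "\<dots> \<le> card (range h) + card (range h)"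
    by (intro add_mono card_image_le) auto
  finally show ?thesis by simp
qed

lemma ceil_bound:
  assumes "CARD('a::finite) \<le> 2 * m"
  shows "nat \<lceil>real CARD('a) / 2\<rceil> \<le> m"
proof -
  have "real CARD('a) / 2 \<le> real m" using assms by linarith
  then have "\<lceil>real CARD('a) / 2\<rceil> \<le> int m" by (simp add: ceiling_le_iff)
  then show ?thesis by (simp add: nat_le_iff)
qed

lemma quad_line:
  fixes A B C :: "'a::{field,finite}"
  assumes ab: "A \<noteq> 0 \<or> B \<noteq> 0"
  shows "CARD('a) \<le> 2 * card (range (\<lambda>x. A*x^2+B*x+C))"
  by (rule card_fib[where \<sigma>="\<lambda>x. if A = 0 then x else -B/A - x"]) (use fib[OF ab] in blast)

theorem lemma5:
  fixes c20 c11 c02 c10 c01 c00 :: "'a::{field, finite}"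
  assumes nonconst: "c20 \<noteq> 0 \<or> c11 \<noteq> 0 \<or> c02 \<noteq> 0 \<or> c10 \<noteq> 0 \<or> c01 \<noteq> 0"
  shows "card (range (quad2_eval c20 c11 c02 c10 c01 c00))
           \<ge> nat \<lceil>real CARD('a) / 2\<rceil>"
proof -
  let ?f = "quad2_eval c20 c11 c02 c10 c01 c00"
  have main: "CARD('a) \<le> 2 * card (range ?f)"
  proof -
    have sub: "range h \<subseteq> range ?f \<Longrightarrow> CARD('a) \<le> 2 * card (range h) \<Longrightarrow> CARD('a) \<le> 2 * card (range ?f)"
      for h :: "'a \<Rightarrow> 'a"
      using card_mono[of "range ?f" "range h"] by simp
    consider "c20 \<noteq> 0 \<or> c10 \<noteq> 0" | "c02 \<noteq> 0 \<or> c01 \<noteq> 0" | "c11 \<noteq> 0" using nonconst by blast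
    then show ?thesis
    proof cases
      case 1
      show ?thesis
      proof (rule sub[OF _ quad_line[OF 1, of c00]])
        show "range (\<lambda>x. c20*x^2+c10*x+c00) \<subseteq> range ?f"
        proof
          fix v assume "v \<in> range (\<lambda>x. c20*x^2+c10*x+c00)"
          then obtain x where "v = c20*x^2+c10*x+c00" by auto
          then have "v = ?f (x, 0)" by (simp add: quad2_eval_def)
          then show "v \<in> range ?f" by simp
        qed
      qed
    next
      case 2
      show ?thesis
      proof (rule sub[OF _ quad_line[OF 2, of c00]])
        show "range (\<lambda>x. c02*x^2+c01*x+c00) \<subseteq> range ?f"
        proof
          fix v assume "v \<in> range (\<lambda>x. c02*x^2+c01*x+c00)"
          then obtain x where "v = c02*x^2+c01*x+c00" by auto
          then have "v = ?f (0, x)" by (simp add: quad2_eval_def)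
          then show "v \<in> range ?f" by simp
        qed
      qed
    next
      case 3
      have 4: "0 \<noteq> (0::'a) \<or> c20 + c11 + c02 + c10 + c01 \<noteq> 0 \<or> c20 \<noteq> 0 \<or> c10 \<noteq> 0 \<or> c02 \<noteq> 0 \<or> c01 \<noteq> 0"
        using 3 by auto
      show ?thesis
      proof (cases "c20 \<noteq> 0 \<or> c10 \<noteq> 0")
        case True
        show ?thesis
        proof (rule sub[OF _ quad_line[OF True, of c00]])
          show "range (\<lambda>x. c20*x^2+c10*x+c00) \<subseteq> range ?f"
          proof
            fix v assume "v \<in> range (\<lambda>x. c20*x^2+c10*x+c00)"
            then obtain x where "v = c20*x^2+c10*x+c00" by auto
            then have "v = ?f (x, 0)" by (simp add: quad2_eval_def)
            then show "v \<in> range ?f" by simp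
          qed
        qed
      next
        case F1: False
        show ?thesis
        proof (cases "c02 \<noteq> 0 \<or> c01 \<noteq> 0")
          case True
          show ?thesis
          proof (rule sub[OF _ quad_line[OF True, of c00]])
            show "range (\<lambda>x. c02*x^2+c01*x+c00) \<subseteq> range ?f"
            proof
              fix v assume "v \<in> range (\<lambda>x. c02*x^2+c01*x+c00)"
              then obtain x where "v = c02*x^2+c01*x+c00" by auto
              then have "v = ?f (0, x)" by (simp add: quad2_eval_def)
              then show "v \<in> range ?f" by simp
            qed
          qed
        next
          case False
          have l: "(0::'a) \<noteq> 0 \<or> c11 \<noteq> 0" using 3 by simp
          show ?thesis
          proof (rule sub[OF _ quad_line[OF l, of c00]])
            show "range (\<lambda>x. 0*x^2+c11*x+c00) \<subseteq> range ?f"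
            proof
              fix v assume "v \<in> range (\<lambda>x. 0*x^2+c11*x+c00)"
              then obtain x where "v = 0*x^2+c11*x+c00" by auto
              then have "v = ?f (x, 1)" using F1 False by (simp add: quad2_eval_def)
              then show "v \<in> range ?f" by simp
            qed
          qed
        qed
      qed
    qed
  qed
  show ?thesis using ceil_bound[OF main] .
qed

end
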